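(* Let $m > 1$ be an integer and $a$ a non-negative integer. Then the congruence class of $a$ modulo $m$ contains infinitely many $\pi/4$-congruent numbers that are pairwise inequivalent modulo $(\mathbb{Q}^\times)^2$. The same statement holds for $3\pi/4$-congruent numbers.
   Context: For $\theta \in \{\pi/4,3\pi/4\}$, a positive integer $n$ is $\theta$-congruent if there exist positive rationals $a,b,c$ such that the triangle with sides $a$, $b\sqrt2$, $c$ has angle $\theta$ opposite $c$ and area $n$; equivalently $ab = 2n$ and $c^2 = a^2+2b^2-2ab$ (for $\theta = \pi/4$), resp. $c^2 = a^2+2b^2+2ab$ (for $\theta=3\pi/4$). *)

theory Defs
  imports Complex_Main
begin

text \<open>A positive integer n is (pi/4)-congruent if there are positive rationals a, b, c
  with a b = 2 n and c^2 = a^2 + 2 b^2 - 2 a b (triangle with sides a, b sqrt 2, c,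
  angle pi/4 opposite c, area n).\<close>
definition pi4_congruent :: "nat \<Rightarrow> bool" where
  "pi4_congruent n \<longleftrightarrow> n > 0 \<and>
     (\<exists>a b c :: rat. a > 0 \<and> b > 0 \<and> c > 0 \<and> a * b = 2 * of_nat n \<and>
        c ^ 2 = a ^ 2 + 2 * b ^ 2 - 2 * a * b)"

definition pi34_congruent :: "nat \<Rightarrow> bool" where
  "pi34_congruent n \<longleftrightarrow> n > 0 \<and>
     (\<exists>a b c :: rat. a > 0 \<and> b > 0 \<and> c > 0 \<and> a * b = 2 * of_nat n \<and>
        c ^ 2 = a ^ 2 + 2 * b ^ 2 + 2 * a * b)"

definition sq_class_equiv :: "nat \<Rightarrow> nat \<Rightarrow> bool" where
  "sq_class_equiv n1 n2 \<longleftrightarrow> (\<exists>q :: rat. q \<noteq> 0 \<and> of_nat n1 = q ^ 2 * of_nat n2)"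

end

theory Submission
  imports Defs "HOL-Number_Theory.Number_Theory"
begin

lemma sq_sym: "sq_class_equiv x y \<Longrightarrow> sq_class_equiv y x"
  unfolding sq_class_equiv_def
proof -
  assume "\<exists>q::rat. q \<noteq> 0 \<and> of_nat x = q ^ 2 * of_nat y"
  then obtain q :: rat where q: "q \<noteq> 0" "of_nat x = q ^ 2 * of_nat y" by blast
  have "of_nat y = (1/q) ^ 2 * of_nat x" using q by (simp add: field_simps power2_eq_square)
  thus "\<exists>q::rat. q \<noteq> 0 \<and> of_nat y = q ^ 2 * of_nat x" using q(1) by (intro exI[of _ "1/q"]) simp
qed

lemma sq_core:
  fixes x y p :: nat
  assumes p: "prime p" and px: "p dvd x" and npx: "\<not> p^2 dvd x" and py: "\<not> p dvd y"
  shows "\<not> sq_class_equiv x y"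
proof
  assume "sq_class_equiv x y"
  then obtain q :: rat where q: "q \<noteq> 0" "of_nat x = q ^ 2 * of_nat y"
    unfolding sq_class_equiv_def by blast
  obtain r s where rs: "quotient_of q = (r, s)" by (cases "quotient_of q") auto
  have s0: "s > 0" using rs quotient_of_denom_pos by blast
  have cop: "coprime r s" using rs quotient_of_coprime by blast
  have qd: "q = of_int r / of_int s" using rs quotient_of_div by blast
  have "(of_int (int x * s^2) :: rat) = of_int (r^2 * int y)"
    using q(2) s0 unfolding qd by (simp add: field_simps power2_eq_square)
  hence e: "int x * s^2 = r^2 * int y" by linarith
  define r' where "r' = nat \<bar>r\<bar>"
  define s' where "s' = nat s"
  have "int (x * s'^2) = int (r'^2 * y)" using e s0 unfolding r'_def s'_def
    by (simp add: power2_eq_square abs_mult_self_eq)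
  hence e2: "x * s'^2 = r'^2 * y" by linarith
  have cop2: "coprime r' s'" unfolding r'_def s'_def using cop s0
    by (metis coprime_abs_left_iff coprime_int_iff int_nat_eq abs_ge_zero less_le_not_le nat_0_le)
  have "p dvd r'^2 * y" using px e2 by (metis dvd_mult2)
  hence "p dvd r'" using p py by (metis prime_dvd_mult_iff prime_dvd_power_iff prime_gt_0_nat pos2)
  hence pr: "p^2 dvd r'^2 * y" by (simp add: dvd_mult2)
  have "\<not> p dvd s'" using cop2 \<open>p dvd r'\<close> p
    by (metis coprime_common_divisor not_prime_unit)
  hence "coprime (p^2) (s'^2)" using p by (simp add: prime_imp_coprime)
  hence "p^2 dvd x" using pr e2 by (metis coprime_dvd_mult_left_iff)
  with npx show False by blast
qed

primrec seqg :: "(nat \<Rightarrow> nat \<Rightarrow> bool) \<Rightarrow> nat \<Rightarrow> nat" where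
  "seqg Q 0 = (SOME n. Q 0 n)"
| "seqg Q (Suc j) = (SOME n. Q (seqg Q j) n)"

lemma greedy:
  assumes H: "\<And>N. \<exists>n p. P n \<and> prime p \<and> p > N \<and> p dvd n \<and> \<not> p^2 dvd n"
  shows "\<exists>S. infinite S \<and> (\<forall>n\<in>S. P n) \<and>
     (\<forall>n1\<in>S. \<forall>n2\<in>S. n1 \<noteq> n2 \<longrightarrow> \<not> sq_class_equiv n1 n2)"
proof -
  define Q where "Q = (\<lambda>N n. \<exists>p. P n \<and> prime p \<and> p > N \<and> p dvd n \<and> \<not> p^2 dvd (n::nat))"
  define g where "g = seqg Q"
  have Q0: "Q 0 (g 0)" unfolding g_def using H[of 0] by (simp add: Q_def) (rule someI_ex, blast)
  have QS: "Q (g j) (g (Suc j))" for j unfolding g_def using H[of "seqg Q j"]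
    by (simp add: Q_def) (rule someI_ex, blast)
  have pos: "g j > 0" for j
  proof (cases j)
    case 0 then show ?thesis using Q0 unfolding Q_def by (metis dvd_0_right gr0I)
  next
    case (Suc k) then show ?thesis using QS[of k] unfolding Q_def by (metis dvd_0_right gr0I)
  qed
  have inc: "g j < g (Suc j)" for j
  proof -
    obtain p where "prime p" "p > g j" "p dvd g (Suc j)" using QS[of j] unfolding Q_def by blast
    thus ?thesis using pos[of "Suc j"] by (meson dvd_imp_le less_le_trans)
  qed
  hence sm: "strict_mono g" by (simp add: strict_mono_Suc_iff)
  have key: "\<not> sq_class_equiv (g i) (g j) \<and> \<not> sq_class_equiv (g j) (g i)" if "i < j" for i j
  proof -
    obtain k where k: "j = Suc k" "i \<le> k" using \<open>i < j\<close> by (cases j) auto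
    obtain p where p: "prime p" "p > g k" "p dvd g j" "\<not> p^2 dvd g j" using QS[of k] k unfolding Q_def by blast
    have "g i \<le> g k" using sm k(2) by (simp add: strict_mono_less_eq)
    hence "\<not> p dvd g i" using p(2) pos[of i] by (meson dvd_imp_le leD le_less_trans)
    hence "\<not> sq_class_equiv (g j) (g i)" using sq_core p by blast
    thus ?thesis using sq_sym by blast
  qed
  show ?thesis
  proof (intro exI conjI)
    show "infinite (range g)" using sm by (simp add: strict_mono_imp_inj_on range_inj_infinite)
    show "\<forall>n\<in>range g. P n"
    proof
      fix n assume "n \<in> range g"
      then obtain j where "n = g j" by blast
      thus "P n" using Q0 QS unfolding Q_def by (cases j) auto
    qed
    show "\<forall>n1\<in>range g. \<forall>n2\<in>range g. n1 \<noteq> n2 \<longrightarrow> \<not> sq_class_equiv n1 n2"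
      using key by (metis linorder_neqE_nat rangeE)
  qed
qed

lemma pi4_wit:
  fixes m z A :: nat
  assumes m: "m > 0" and z: "z > 0" and A: "A = m^2 * z"
  shows "pi4_congruent (z * (A + 1) * (2*A^2 + 4*A + 1))"
  unfolding pi4_congruent_def
proof (intro conjI exI)
  let ?m = "rat_of_nat m" and ?z = "rat_of_nat z" and ?A = "rat_of_nat A"
  have Ar: "?A = ?m^2 * ?z" using A by simp
  have mp: "?m > 0" using m by simp
  have zp: "?z > 0" using z by simp
  show "z * (A + 1) * (2*A^2 + 4*A + 1) > 0" using z by simp
  show "(2*?A^2 + 4*?A + 1) / ?m > 0" using mp by (intro divide_pos_pos) (simp_all add: add_pos_nonneg add_nonneg_pos)
  show "2 * ?m * ?z * (?A + 1) > 0" using mp zp by (simp add: add_pos_nonneg)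
  show "((?A+1)^2 + ?A^2) / ?m > 0" using mp by (simp add: add_pos_nonneg)
  show "(2*?A^2 + 4*?A + 1) / ?m * (2 * ?m * ?z * (?A + 1)) =
        2 * of_nat (z * (A + 1) * (2*A^2 + 4*A + 1))"
    using mp by (simp add: field_simps)
  show "(((?A+1)^2 + ?A^2) / ?m)^2 = ((2*?A^2 + 4*?A + 1) / ?m)^2 + 2 * (2 * ?m * ?z * (?A + 1))^2
        - 2 * ((2*?A^2 + 4*?A + 1) / ?m) * (2 * ?m * ?z * (?A + 1))"
    using mp unfolding Ar by (simp add: field_simps power2_eq_square)
qed

lemma pi34_wit:
  fixes m z A :: nat
  assumes m: "m > 0" and z: "z > 0" and A: "A = m^2 * z"
  shows "pi34_congruent (z * (3*A + 1) * (2*A^2 + 4*A + 1))"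
  unfolding pi34_congruent_def
proof (intro conjI exI)
  let ?m = "rat_of_nat m" and ?z = "rat_of_nat z" and ?A = "rat_of_nat A"
  have Ar: "?A = ?m^2 * ?z" using A by simp
  have mp: "?m > 0" using m by simp
  have zp: "?z > 0" using z by simp
  show "z * (3*A + 1) * (2*A^2 + 4*A + 1) > 0" using z by simp
  show "(2*?A^2 + 4*?A + 1) / ?m > 0" using mp by (intro divide_pos_pos) (simp_all add: add_pos_nonneg add_nonneg_pos)
  show "2 * ?m * ?z * (3*?A + 1) > 0" using mp zp by (simp add: add_pos_nonneg)
  show "((3*?A+1)^2 + ?A^2) / ?m > 0" using mp by (simp add: add_pos_nonneg)
  show "(2*?A^2 + 4*?A + 1) / ?m * (2 * ?m * ?z * (3*?A + 1)) =
        2 * of_nat (z * (3*A + 1) * (2*A^2 + 4*A + 1))"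
    using mp by (simp add: field_simps)
  show "(((3*?A+1)^2 + ?A^2) / ?m)^2 = ((2*?A^2 + 4*?A + 1) / ?m)^2 + 2 * (2 * ?m * ?z * (3*?A + 1))^2
        + 2 * ((2*?A^2 + 4*?A + 1) / ?m) * (2 * ?m * ?z * (3*?A + 1))"
    using mp unfolding Ar by (simp add: field_simps power2_eq_square)
qed

lemma construct:
  fixes m a N :: nat
  assumes m: "m > 1"
  shows "\<exists>z p. prime p \<and> p > N \<and> z > 0 \<and> z mod m = a mod m \<and> p dvd z \<and> \<not> p^2 dvd z"
proof -
  obtain p where p: "prime p" "p > N + 2*m" using bigger_prime by blast
  have "\<not> p dvd m" 
  proof
    assume "p dvd m"
    hence "p \<le> m" using m by (simp add: dvd_imp_le)
    thus False using p(2) by simp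
  qed
  hence cop: "coprime p m" using p(1) by (simp add: prime_imp_coprime)
  then obtain x where x: "[p * x = a] (mod m)" using cong_solve_dvd_nat[of p m a] by auto
  define c where "c = x mod m + m"
  define z where "z = p * c"
  have "x mod m < m" using m by simp
  hence c0: "c > 0" "c < p" using m p(2) unfolding c_def by linarith+
  have "\<not> p dvd c" using c0 by (meson dvd_imp_le not_le)
  hence nz: "\<not> p^2 dvd z" unfolding z_def using p(1) by (simp add: power2_eq_square prime_gt_0_nat)
  have "z = p * (x mod m) + m * p" unfolding z_def c_def by (simp add: algebra_simps)
  hence "z mod m = (p * (x mod m)) mod m" by simp
  also have "\<dots> = (p * x) mod m" by (rule mod_mult_right_eq)
  also have "\<dots> = a mod m" using x unfolding cong_def .
  finally have zm: "z mod m = a mod m" .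
  have z0: "z > 0" unfolding z_def using c0 p(1) prime_gt_0_nat by simp
  have pz: "p dvd z" unfolding z_def by simp
  have pN: "p > N" using p(2) by simp
  show ?thesis using p(1) pN z0 zm pz nz by blast
qed

lemma finish:
  fixes m z p e :: nat
  assumes p: "prime p" "p dvd z" "\<not> p^2 dvd z" and A: "A = m^2 * z"
  defines "n \<equiv> z * (e*A + 1) * (2*A^2 + 4*A + 1)"
  shows "n mod m = z mod m" "p dvd n" "\<not> p^2 dvd n"
proof -
  define T where "T = e * (2*A^2 + 4*A + 1) + 2*A + 4"
  have n: "n = z + z * A * T" unfolding n_def T_def by (simp add: algebra_simps power2_eq_square)
  have "z * A * T = m * (m * z * z * T)" unfolding A by (simp add: power2_eq_square)
  hence n2: "n = z + m * (m * z * z * T)" using n by simp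
  show "n mod m = z mod m" unfolding n2 by simp
  show "p dvd n" unfolding n_def using p(2) by simp
  have "p dvd A" unfolding A using p(2) by simp
  hence "p^2 dvd z * A * T" using p(2) by (simp add: power2_eq_square mult_dvd_mono)
  thus "\<not> p^2 dvd n" unfolding n using p(3) by (simp add: dvd_add_left_iff)
qed

theorem theorem5p2:
  fixes m a :: nat
  assumes "m > 1"
  shows "(\<exists>S :: nat set. infinite S \<and>
            (\<forall>n\<in>S. n mod m = a mod m \<and> pi4_congruent n) \<and>
            (\<forall>n1\<in>S. \<forall>n2\<in>S. n1 \<noteq> n2 \<longrightarrow> \<not> sq_class_equiv n1 n2))
       \<and> (\<exists>S :: nat set. infinite S \<and>
            (\<forall>n\<in>S. n mod m = a mod m \<and> pi34_congruent n) \<and>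
            (\<forall>n1\<in>S. \<forall>n2\<in>S. n1 \<noteq> n2 \<longrightarrow> \<not> sq_class_equiv n1 n2))"
proof (intro conjI)
  show "\<exists>S :: nat set. infinite S \<and>
            (\<forall>n\<in>S. n mod m = a mod m \<and> pi4_congruent n) \<and>
            (\<forall>n1\<in>S. \<forall>n2\<in>S. n1 \<noteq> n2 \<longrightarrow> \<not> sq_class_equiv n1 n2)"
  proof (rule greedy)
    fix N
    obtain z p where zp: "prime p" "p > N" "z > 0" "z mod m = a mod m" "p dvd z" "\<not> p^2 dvd z"
      using construct[OF assms] by blast
    define A where "A = m^2 * z"
    note f = finish[OF zp(1) zp(5) zp(6) A_def, of 1]
    have w: "pi4_congruent (z * (1*A + 1) * (2*A^2 + 4*A + 1))"
      using pi4_wit[of m z A] assms zp(3) A_def by simp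
    show "\<exists>n p. (n mod m = a mod m \<and> pi4_congruent n) \<and> prime p \<and> p > N \<and> p dvd n \<and> \<not> p^2 dvd n"
    proof (rule exI[of _ "z * (1 * A + 1) * (2 * A^2 + 4 * A + 1)"], rule exI[of _ p], intro conjI)
      show "z * (1 * A + 1) * (2 * A^2 + 4 * A + 1) mod m = a mod m" using f(1) zp(4) by (rule trans)
    qed (fact w zp(1) zp(2) f(2) f(3))+
  qed
  show "\<exists>S :: nat set. infinite S \<and>
            (\<forall>n\<in>S. n mod m = a mod m \<and> pi34_congruent n) \<and>
            (\<forall>n1\<in>S. \<forall>n2\<in>S. n1 \<noteq> n2 \<longrightarrow> \<not> sq_class_equiv n1 n2)"
  proof (rule greedy)
    fix N
    obtain z p where zp: "prime p" "p > N" "z > 0" "z mod m = a mod m" "p dvd z" "\<not> p^2 dvd z"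
      using construct[OF assms] by blast
    define A where "A = m^2 * z"
    note f = finish[OF zp(1) zp(5) zp(6) A_def, of 3]
    have w: "pi34_congruent (z * (3*A + 1) * (2*A^2 + 4*A + 1))"
      using pi34_wit[of m z A] assms zp(3) A_def by simp
    show "\<exists>n p. (n mod m = a mod m \<and> pi34_congruent n) \<and> prime p \<and> p > N \<and> p dvd n \<and> \<not> p^2 dvd n"
    proof (rule exI[of _ "z * (3 * A + 1) * (2 * A^2 + 4 * A + 1)"], rule exI[of _ p], intro conjI)
      show "z * (3 * A + 1) * (2 * A^2 + 4 * A + 1) mod m = a mod m" using f(1) zp(4) by (rule trans)
    qed (fact w zp(1) zp(2) f(2) f(3))+
  qed
qed

end
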